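(* Let $E_{(r_1,\dots,r_n)}^{(v_1,\dots,v_n)}$ be an $n$-induced $\mathbb{Z}$-grading on $E$. If there exist $i,j\in\{1,\dots,n\}$ such that $r_i<0<r_j$, $\gcd(r_i,r_j)=1$ and $v_i=v_j=\infty$, then $E_{(r_1,\dots,r_n)}^{(v_1,\dots,v_n)}$ is of full support (its support is $\mathbb{Z}$).
   Context: $E$ is the Grassmann algebra of an infinite-dimensional vector space $L$ with basis $e_1,e_2,\dots$ (basis $1$, $e_{i_1}\cdots e_{i_k}$ with $i_1<\dots<i_k$; $e_ie_j=-e_je_i$). For pairwise distinct integers $r_1,\dots,r_n$ and $v_1,\dots,v_n\in\mathbb{N}\cup\{\infty\}$, the $n$-induced $\mathbb{Z}$-grading $E_{(r_1,\dots,r_n)}^{(v_1,\dots,v_n)}=\bigoplus_rA_r$ is obtained by splitting $\{e_i\}$ into $n$ disjoint sets of cardinalities $v_1,\dots,v_n$, giving elements of the $j$-th set degree $r_j$ and monomials the sum of the degrees of their factors; its support is $\{r:A_r\ne0\}$. *)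

theory Defs
  imports Main "HOL-Library.Extended_Nat"
begin

text \<open>The Grassmann algebra E over a field k of the vector space L with basis
  e_0, e_1, ... (indexed by nat).  As a k-vector space, E has basis the monomials
  e_{i_1}...e_{i_m} (i_1 < ... < i_m), which we identify with finite sets of
  indices (the empty set being 1).  The multiplication plays no role
  for the support of a grading, so only the linear structure is modelled.\<close>

definition grassmann_elems :: "(nat set \<Rightarrow> 'k::zero) set" where
  "grassmann_elems = {x. finite {S. x S \<noteq> 0} \<and> (\<forall>S. x S \<noteq> 0 \<longrightarrow> finite S)}"

definition ecard :: "'a set \<Rightarrow> enat" where
  "ecard A = (if finite A then enat (card A) else \<infinity>)"

text \<open>Data of an n-induced Z-grading: the n sets are indexed by 0..<n,
  the j-th set is {i. part i = j}, of cardinality v j, and its elements get degree r j.\<close>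
definition n_induced :: "nat \<Rightarrow> (nat \<Rightarrow> int) \<Rightarrow> (nat \<Rightarrow> enat) \<Rightarrow> (nat \<Rightarrow> nat) \<Rightarrow> bool" where
  "n_induced n r v part \<longleftrightarrow>
     inj_on r {..<n} \<and> (\<forall>i. part i < n) \<and> (\<forall>j<n. ecard {i. part i = j} = v j)"

definition mono_deg :: "(nat \<Rightarrow> int) \<Rightarrow> (nat \<Rightarrow> nat) \<Rightarrow> nat set \<Rightarrow> int" where
  "mono_deg r part S = (\<Sum>i\<in>S. r (part i))"

definition induced_component :: "(nat \<Rightarrow> int) \<Rightarrow> (nat \<Rightarrow> nat) \<Rightarrow> int \<Rightarrow> (nat set \<Rightarrow> 'k::zero) set" where
  "induced_component r part d =
     {x \<in> grassmann_elems. \<forall>S. x S \<noteq> 0 \<longrightarrow> mono_deg r part S = d}"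

definition induced_support :: "'k::field itself \<Rightarrow> (nat \<Rightarrow> int) \<Rightarrow> (nat \<Rightarrow> nat) \<Rightarrow> int set" where
  "induced_support _ r part =
     {d. \<exists>x \<in> (induced_component r part d :: (nat set \<Rightarrow> 'k) set). x \<noteq> (\<lambda>_. 0)}"

end

theory Submission
  imports Defs
begin

lemma nonneg_comb:
  fixes p q d :: int
  assumes "p < 0" "0 < q" "gcd p q = 1"
  shows "\<exists>a b::nat. int a * p + int b * q = d"
proof -
  obtain u w where uw: "u * p + w * q = gcd p q" using bezout_int by blast
  define x where "x = u * d"
  define y where "y = w * d"
  have xy: "x * p + y * q = d" using uw assms(3) unfolding x_def y_def
    by (metis mult.commute mult.left_commute distrib_left mult.right_neutral)
  define t where "t = \<bar>x\<bar> + \<bar>y\<bar>"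
  have t0: "t \<ge> 0" unfolding t_def by simp
  have h1: "x + t * q \<ge> 0"
  proof -
    have "t * q \<ge> t" using t0 assms(2) by (simp add: mult_le_cancel_left1)
    thus ?thesis unfolding t_def by linarith
  qed
  have h2: "y - t * p \<ge> 0"
  proof -
    have "- t * p \<ge> t" using t0 assms(1)
      by (metis minus_mult_commute mult_le_cancel_left1 neg_0_less_iff_less zero_less_one_class.zero_le_one add_0 mult.commute  nle_le zle_diff1_eq int_one_le_iff_zero_less le_minus_iff mult_minus_left mult_minus_right zero_less_mult_iff not_less)
    thus ?thesis unfolding t_def by linarith
  qed
  have "(x + t * q) * p + (y - t * p) * q = d" using xy by (simp add: algebra_simps)
  hence "int (nat (x + t * q)) * p + int (nat (y - t * p)) * q = d" using h1 h2 by simp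
  thus ?thesis by blast
qed

theorem proposition5p1:
  fixes n :: nat and r :: "nat \<Rightarrow> int" and v :: "nat \<Rightarrow> enat" and part :: "nat \<Rightarrow> nat"
    and i j :: nat
  assumes "n_induced n r v part"
    and "i < n" and "j < n"
    and "r i < 0" and "0 < r j"
    and "gcd (r i) (r j) = 1"
    and "v i = \<infinity>" and "v j = \<infinity>"
  shows "induced_support TYPE('k::field) r part = UNIV"
proof -
  have ij: "i \<noteq> j" using assms(4,5) by auto
  have infI: "infinite {k. part k = i}" and infJ: "infinite {k. part k = j}"
    using assms(1,2,3,7,8) unfolding n_induced_def ecard_def
    by (metis enat.distinct(1))+
  show ?thesis
  proof (rule set_eqI, rule iffI)
    fix d :: int
    assume "d \<in> UNIV"
    obtain a b :: nat where ab: "int a * r i + int b * r j = d"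
      using nonneg_comb[OF assms(4,5,6)] by blast
    obtain A where A: "finite A" "card A = a" "A \<subseteq> {k. part k = i}"
      using infinite_arbitrarily_large[OF infI] by blast
    obtain B where B: "finite B" "card B = b" "B \<subseteq> {k. part k = j}"
      using infinite_arbitrarily_large[OF infJ] by blast
    have disj: "A \<inter> B = {}" using A(3) B(3) ij by auto
    define S where "S = A \<union> B"
    have fS: "finite S" using A B S_def by simp
    have sA: "(\<Sum>k\<in>A. r (part k)) = int a * r i"
      using A by (simp add: sum.cong[of A A "\<lambda>k. r (part k)" "\<lambda>k. r i"] subset_eq)
    have sB: "(\<Sum>k\<in>B. r (part k)) = int b * r j"
      using B by (simp add: sum.cong[of B B "\<lambda>k. r (part k)" "\<lambda>k. r j"] subset_eq)
    have deg: "mono_deg r part S = d"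
      unfolding mono_deg_def S_def using sum.union_disjoint[OF A(1) B(1) disj, of "\<lambda>k. r (part k)"] sA sB ab by simp
    define x :: "nat set \<Rightarrow> 'k" where "x = (\<lambda>T. if T = S then 1 else 0)"
    have "{T. x T \<noteq> 0} = {S}" unfolding x_def by auto
    hence xg: "x \<in> grassmann_elems" unfolding grassmann_elems_def using fS x_def
      by (auto split: if_splits)
    have "x \<in> induced_component r part d"
      unfolding induced_component_def using xg deg x_def by (auto split: if_splits)
    moreover have "x \<noteq> (\<lambda>_. 0)" unfolding x_def by (metis one_neq_zero)
    ultimately show "d \<in> induced_support TYPE('k) r part"
      unfolding induced_support_def by blast
  qed simp
qed

end
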